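(* Let $d \geq 2$. Then: (1) for all integers $s_1, \ldots, s_k \geq 1$, $$\frac{s_1}{s_1+\ldots+s_k}\mathsf U_{d,s_1}+\ldots+\frac{s_k}{s_1+\ldots+s_k}\mathsf U_{d,s_k}\subseteq \mathsf U_{d,s_1+\ldots+s_k};$$ (2) for all integers $s, n \geq 1$, $\mathsf U_{d,s} \subseteq \mathsf U_{d,ns}$; (3) for all integers $s,t \geq 1$, $\mathsf U_{d,s}\cap \mathsf U_{d,t} \subseteq \mathsf U_{d,s+t}$.
   Context: For integers $d\ge 2$, $s\ge 1$, a matrix $U\in\mathcal U(ds)$ (unitary $ds\times ds$ complex matrices) is viewed as a $d\times d$ block matrix with blocks $U_{ij}\in M_s(\mathbb C)$. Define $\phi_{d,s}(U)=\big(\tfrac1s\|U_{ij}\|_F^2\big)_{i,j=1}^d$, where $\|X\|_F=\operatorname{Tr}(XX^* )^{1/2}$, and $\mathsf U_{d,s}:=\phi_{d,s}(\mathcal U(ds))$. Sums of sets are Minkowski sums. *)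

theory Defs
  imports Complex_Main "Jordan_Normal_Form.Matrix"
begin

definition adj_mat :: "complex mat \<Rightarrow> complex mat" where
  "adj_mat U = mat (dim_col U) (dim_row U) (\<lambda>(i,j). cnj (U $$ (j,i)))"

definition unitary_group :: "nat \<Rightarrow> complex mat set" where
  "unitary_group n = {U. U \<in> carrier_mat n n \<and> U * adj_mat U = 1\<^sub>m n \<and> adj_mat U * U = 1\<^sub>m n}"

text \<open>The (i,j) block (of size s x s) of a ds x ds matrix, and the squared Frobenius norm Tr(XX^*) written out as the sum of squared moduli of entries.\<close>
definition block_mat :: "nat \<Rightarrow> complex mat \<Rightarrow> nat \<Rightarrow> nat \<Rightarrow> complex mat" where
  "block_mat s U i j = mat s s (\<lambda>(a,b). U $$ (i*s + a, j*s + b))"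

definition frob_norm_sq :: "complex mat \<Rightarrow> real" where
  "frob_norm_sq X = (\<Sum>a<dim_row X. \<Sum>b<dim_col X. (cmod (X $$ (a,b)))\<^sup>2)"

definition phi :: "nat \<Rightarrow> nat \<Rightarrow> complex mat \<Rightarrow> real mat" where
  "phi d s U = mat d d (\<lambda>(i,j). frob_norm_sq (block_mat s U i j) / real s)"

definition Uset :: "nat \<Rightarrow> nat \<Rightarrow> real mat set" where
  "Uset d s = phi d s ` unitary_group (d*s)"

definition wsum_sets :: "nat \<Rightarrow> nat \<Rightarrow> (nat \<Rightarrow> real) \<Rightarrow> (nat \<Rightarrow> real mat set) \<Rightarrow> real mat set" where
  "wsum_sets d k c A = {mat d d (\<lambda>ij. \<Sum>l<k. c l * X l $$ ij) | X. \<forall>l<k. X l \<in> A l}"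

end

theory Submission
  imports Defs
begin

lemma sum_split_add: "(\<Sum>c<p+q. f c) = (\<Sum>c<p. f c) + (\<Sum>c<q. f (p+c) :: 'a::comm_monoid_add)"
  for p q :: nat
  by (induction q) (auto simp: add.assoc)

lemma unit_iff:
  assumes "A \<in> carrier_mat n n"
  shows "A \<in> unitary_group n \<longleftrightarrow>
    (\<forall>x<n. \<forall>y<n. (\<Sum>c<n. A$$(x,c) * cnj (A$$(y,c))) = (if x=y then 1 else 0)) \<and>
    (\<forall>x<n. \<forall>y<n. (\<Sum>c<n. cnj (A$$(c,x)) * A$$(c,y)) = (if x=y then 1 else 0))"
proof -
  have e1: "(A * adj_mat A) $$ (x,y) = (\<Sum>c<n. A$$(x,c) * cnj (A$$(y,c)))" if "x<n" "y<n" for x y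
    using assms that by (simp add: adj_mat_def scalar_prod_def row_def col_def lessThan_atLeast0)
  have e2: "(adj_mat A * A) $$ (x,y) = (\<Sum>c<n. cnj (A$$(c,x)) * A$$(c,y))" if "x<n" "y<n" for x y
    using assms that by (simp add: adj_mat_def scalar_prod_def row_def col_def lessThan_atLeast0)
  have d: "dim_row (A * adj_mat A) = n" "dim_col (A * adj_mat A) = n"
     "dim_row (adj_mat A * A) = n" "dim_col (adj_mat A * A) = n"
    using assms by (auto simp: adj_mat_def)
  have q1: "A * adj_mat A = 1\<^sub>m n \<longleftrightarrow> (\<forall>x<n. \<forall>y<n. (\<Sum>c<n. A$$(x,c) * cnj (A$$(y,c))) = (if x=y then 1 else 0))"
  proof
    assume h: "A * adj_mat A = 1\<^sub>m n"
    show "\<forall>x<n. \<forall>y<n. (\<Sum>c<n. A$$(x,c) * cnj (A$$(y,c))) = (if x=y then 1 else 0)"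
      using e1 h by (metis index_one_mat(1))
  next
    assume h: "\<forall>x<n. \<forall>y<n. (\<Sum>c<n. A$$(x,c) * cnj (A$$(y,c))) = (if x=y then 1 else 0)"
    show "A * adj_mat A = 1\<^sub>m n"
      by (rule eq_matI) (use d e1 h in auto)
  qed
  have q2: "adj_mat A * A = 1\<^sub>m n \<longleftrightarrow> (\<forall>x<n. \<forall>y<n. (\<Sum>c<n. cnj (A$$(c,x)) * A$$(c,y)) = (if x=y then 1 else 0))"
  proof
    assume h: "adj_mat A * A = 1\<^sub>m n"
    show "\<forall>x<n. \<forall>y<n. (\<Sum>c<n. cnj (A$$(c,x)) * A$$(c,y)) = (if x=y then 1 else 0)"
      using e2 h by (metis index_one_mat(1))
  next
    assume h: "\<forall>x<n. \<forall>y<n. (\<Sum>c<n. cnj (A$$(c,x)) * A$$(c,y)) = (if x=y then 1 else 0)"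
    show "adj_mat A * A = 1\<^sub>m n"
      by (rule eq_matI) (use d e2 h in auto)
  qed
  show ?thesis unfolding unitary_group_def using assms q1 q2 by auto
qed

lemma unitary_perm:
  assumes D: "D \<in> unitary_group n" and b: "bij_betw \<sigma> {..<n} {..<n}"
  shows "mat n n (\<lambda>(r,c). D$$(\<sigma> r, \<sigma> c)) \<in> unitary_group n"
proof -
  have Dc: "D \<in> carrier_mat n n" using D unfolding unitary_group_def by auto
  note DU = D[unfolded unit_iff[OF Dc]]
  have sx: "\<sigma> x < n" if "x < n" for x using b that by (auto simp: bij_betw_def)
  have inj: "\<sigma> x = \<sigma> y \<longleftrightarrow> x = y" if "x<n" "y<n" for x y
    using b that by (auto simp: bij_betw_def inj_on_def)
  have r1: "(\<Sum>c<n. g (\<sigma> c)) = (\<Sum>c<n. g c)" for g :: "nat \<Rightarrow> complex"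
    using sum.reindex_bij_betw[OF b] .
  show ?thesis
    unfolding unit_iff[OF mat_carrier]
  proof safe
    fix x y assume xy: "x<n" "y<n"
    have "(\<Sum>c<n. mat n n (\<lambda>(r,c). D$$(\<sigma> r, \<sigma> c)) $$ (x,c) * cnj (mat n n (\<lambda>(r,c). D$$(\<sigma> r, \<sigma> c)) $$ (y,c)))
       = (\<Sum>c<n. D$$(\<sigma> x, \<sigma> c) * cnj (D$$(\<sigma> y, \<sigma> c)))"
      using xy by (intro sum.cong) auto
    also have "\<dots> = (\<Sum>c<n. D$$(\<sigma> x, c) * cnj (D$$(\<sigma> y, c)))"
      by (rule r1)
    also have "\<dots> = (if x = y then 1 else 0)" using DU sx xy inj by auto
    finally show "(\<Sum>c<n. mat n n (\<lambda>(r,c). D$$(\<sigma> r, \<sigma> c)) $$ (x,c) * cnj (mat n n (\<lambda>(r,c). D$$(\<sigma> r, \<sigma> c)) $$ (y,c)))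
       = (if x = y then 1 else 0)" .
  next
    fix x y assume xy: "x<n" "y<n"
    have "(\<Sum>c<n. cnj (mat n n (\<lambda>(r,c). D$$(\<sigma> r, \<sigma> c)) $$ (c,x)) * mat n n (\<lambda>(r,c). D$$(\<sigma> r, \<sigma> c)) $$ (c,y))
       = (\<Sum>c<n. cnj (D$$(\<sigma> c, \<sigma> x)) * D$$(\<sigma> c, \<sigma> y))"
      using xy by (intro sum.cong) auto
    also have "\<dots> = (\<Sum>c<n. cnj (D$$(c, \<sigma> x)) * D$$(c, \<sigma> y))"
      by (rule r1)
    also have "\<dots> = (if x = y then 1 else 0)" using DU sx xy inj by auto
    finally show "(\<Sum>c<n. cnj (mat n n (\<lambda>(r,c). D$$(\<sigma> r, \<sigma> c)) $$ (c,x)) * mat n n (\<lambda>(r,c). D$$(\<sigma> r, \<sigma> c)) $$ (c,y))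
       = (if x = y then 1 else 0)" .
  qed
qed

definition bdiag :: "nat \<Rightarrow> nat \<Rightarrow> complex mat \<Rightarrow> complex mat \<Rightarrow> complex mat" where
  "bdiag p q U V = mat (p+q) (p+q) (\<lambda>(x,y). if x<p \<and> y<p then U$$(x,y)
       else if p\<le>x \<and> p\<le>y then V$$(x-p,y-p) else 0)"

lemma bdiag_unitary:
  assumes U: "U \<in> unitary_group p" and V: "V \<in> unitary_group q"
  shows "bdiag p q U V \<in> unitary_group (p+q)"
proof -
  have Uc: "U \<in> carrier_mat p p" using U unfolding unitary_group_def by auto
  have Vc: "V \<in> carrier_mat q q" using V unfolding unitary_group_def by auto
  note UU = U[unfolded unit_iff[OF Uc]]
  note VV = V[unfolded unit_iff[OF Vc]]
  let ?B = "bdiag p q U V"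
  have B1: "?B $$ (x,y) = U$$(x,y)" if "x<p" "y<p" for x y
    using that by (simp add: bdiag_def)
  have B2: "?B $$ (p+x,p+y) = V$$(x,y)" if "x<q" "y<q" for x y
    using that by (simp add: bdiag_def)
  have B3: "?B $$ (x,p+y) = 0" if "x<p" "y<q" for x y
    using that by (simp add: bdiag_def)
  have B4: "?B $$ (p+x,y) = 0" if "x<q" "y<p" for x y
    using that by (simp add: bdiag_def)
  have cases: "P x" if "x < p+q" "\<And>x. x<p \<Longrightarrow> P x" "\<And>x'. x'<q \<Longrightarrow> P (p+x')" for P x
    using that by (metis add_diff_inverse_nat nat_add_left_cancel_less)
  have Bc: "?B \<in> carrier_mat (p+q) (p+q)" by (simp add: bdiag_def)
  show ?thesis
    unfolding unit_iff[OF Bc]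
  proof safe
    fix x y assume xy: "x<p+q" "y<p+q"
    show "(\<Sum>c<p+q. ?B $$ (x,c) * cnj (?B $$ (y,c))) = (if x = y then 1 else 0)"
      unfolding sum_split_add
    proof (rule cases[OF xy(1)]; rule cases[OF xy(2)])
      fix x y assume "x<p" "y<p" thus "(\<Sum>c<p. ?B $$ (x,c) * cnj (?B $$ (y,c))) + (\<Sum>c<q. ?B $$ (x,p+c) * cnj (?B $$ (y,p+c))) = (if x = y then 1 else 0)"
        using UU by (simp add: B1 B3)
    next
      fix x y assume "x<p" "y<q" thus "(\<Sum>c<p. ?B $$ (x,c) * cnj (?B $$ (p+y,c))) + (\<Sum>c<q. ?B $$ (x,p+c) * cnj (?B $$ (p+y,p+c))) = (if x = p+y then 1 else 0)"
        by (simp add: B3 B4)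
    next
      fix x y assume "x<q" "y<p" thus "(\<Sum>c<p. ?B $$ (p+x,c) * cnj (?B $$ (y,c))) + (\<Sum>c<q. ?B $$ (p+x,p+c) * cnj (?B $$ (y,p+c))) = (if p+x = y then 1 else 0)"
        by (simp add: B3 B4)
    next
      fix x y assume "x<q" "y<q" thus "(\<Sum>c<p. ?B $$ (p+x,c) * cnj (?B $$ (p+y,c))) + (\<Sum>c<q. ?B $$ (p+x,p+c) * cnj (?B $$ (p+y,p+c))) = (if p+x = p+y then 1 else 0)"
        using VV by (simp add: B2 B4)
    qed
  next
    fix x y assume xy: "x<p+q" "y<p+q"
    show "(\<Sum>c<p+q. cnj (?B $$ (c,x)) * ?B $$ (c,y)) = (if x = y then 1 else 0)"
      unfolding sum_split_add
    proof (rule cases[OF xy(1)]; rule cases[OF xy(2)])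
      fix x y assume "x<p" "y<p" thus "(\<Sum>c<p. cnj (?B $$ (c,x)) * ?B $$ (c,y)) + (\<Sum>c<q. cnj (?B $$ (p+c,x)) * ?B $$ (p+c,y)) = (if x = y then 1 else 0)"
        using UU by (simp add: B1 B4)
    next
      fix x y assume "x<p" "y<q" thus "(\<Sum>c<p. cnj (?B $$ (c,x)) * ?B $$ (c,p+y)) + (\<Sum>c<q. cnj (?B $$ (p+c,x)) * ?B $$ (p+c,p+y)) = (if x = p+y then 1 else 0)"
        by (simp add: B3 B4)
    next
      fix x y assume "x<q" "y<p" thus "(\<Sum>c<p. cnj (?B $$ (c,p+x)) * ?B $$ (c,y)) + (\<Sum>c<q. cnj (?B $$ (p+c,p+x)) * ?B $$ (p+c,y)) = (if p+x = y then 1 else 0)"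
        by (simp add: B3 B4)
    next
      fix x y assume "x<q" "y<q" thus "(\<Sum>c<p. cnj (?B $$ (c,p+x)) * ?B $$ (c,p+y)) + (\<Sum>c<q. cnj (?B $$ (p+c,p+x)) * ?B $$ (p+c,p+y)) = (if p+x = p+y then 1 else 0)"
        using VV by (simp add: B2 B3)
    qed
  qed
qed

lemma dm_eq: "a < m \<Longrightarrow> (i*m + a) div m = i \<and> (i*m + a) mod m = (a::nat)"
  by (simp add: add.commute)

lemma dm_bound: "i < d \<Longrightarrow> a < m \<Longrightarrow> i*m + a < d*(m::nat)"
proof -
  assume "i < d" "a < m"
  then have "i*m + a < (i+1)*m" by simp
  also have "\<dots> \<le> d*m" using \<open>i<d\<close> by (intro mult_right_mono) auto
  finally show ?thesis .
qed

lemma dm_decomp: assumes "r < d*(m::nat)" obtains i a where "r = i*m + a" "a < m" "i < d"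
proof -
  have m: "m > 0" using assms by (cases m) auto
  have "r div m < d" using assms m by (simp add: div_less_iff_less_mult mult.commute)
  moreover have "r = (r div m)*m + r mod m" by simp
  moreover have "r mod m < m" using m by simp
  ultimately show ?thesis using that by blast
qed

definition sg :: "nat \<Rightarrow> nat \<Rightarrow> nat \<Rightarrow> nat \<Rightarrow> nat" where
  "sg d s t r = (if r mod (s+t) < s then (r div (s+t))*s + r mod (s+t)
     else d*s + (r div (s+t))*t + (r mod (s+t) - s))"

definition tg :: "nat \<Rightarrow> nat \<Rightarrow> nat \<Rightarrow> nat \<Rightarrow> nat" where
  "tg d s t x = (if x < d*s then (x div s)*(s+t) + x mod s
     else ((x - d*s) div t)*(s+t) + (s + (x - d*s) mod t))"

lemma sg_eq1: "a < s \<Longrightarrow> sg d s t (i*(s+t) + a) = i*s + a"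
  using dm_eq[of a "s+t" i] by (simp add: sg_def)

lemma sg_eq2: "a < t \<Longrightarrow> sg d s t (i*(s+t) + (s + a)) = d*s + (i*t + a)"
  using dm_eq[of "s+a" "s+t" i] by (simp add: sg_def)

lemma sg_bij:
  assumes "s \<ge> 1" "t \<ge> 1"
  shows "bij_betw (sg d s t) {..<d*(s+t)} {..<d*(s+t)}"
proof (rule bij_betw_byWitness[where f'="tg d s t"])
  show "\<forall>r\<in>{..<d*(s+t)}. tg d s t (sg d s t r) = r"
  proof
    fix r assume "r \<in> {..<d*(s+t)}"
    then obtain i a where r: "r = i*(s+t) + a" "a < s+t" "i < d" using dm_decomp[of r d "s+t"] by auto
    show "tg d s t (sg d s t r) = r"
    proof (cases "a < s")
      case True
      have "i*s + a < d*s" using dm_bound r True by blast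
      then show ?thesis using True r sg_eq1 dm_eq[of a s i] by (simp add: tg_def)
    next
      case False
      then obtain a' where a': "a = s + a'" "a' < t" using r
        by (metis add_diff_inverse_nat add_less_cancel_left)
      show ?thesis using a' r sg_eq2 dm_eq[of a' t i] by (simp add: tg_def)
    qed
  qed
  show "\<forall>x\<in>{..<d*(s+t)}. sg d s t (tg d s t x) = x"
  proof
    fix x assume x: "x \<in> {..<d*(s+t)}"
    show "sg d s t (tg d s t x) = x"
    proof (cases "x < d*s")
      case True
      then obtain i a where r: "x = i*s + a" "a < s" "i < d" using dm_decomp by blast
      show ?thesis using True r sg_eq1 dm_eq[of a s i] by (simp add: tg_def)
    next
      case False
      then have "x - d*s < d*t" using x by (simp add: distrib_left)
      then obtain i a where r: "x - d*s = i*t + a" "a < t" "i < d" using dm_decomp by blast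
      have "tg d s t x = i*(s+t) + (s + a)" using False r dm_eq[of a t i] by (simp add: tg_def)
      then show ?thesis using sg_eq2[OF r(2)] r(1) False by simp
    qed
  qed
  show "sg d s t ` {..<d*(s+t)} \<subseteq> {..<d*(s+t)}"
  proof
    fix y assume "y \<in> sg d s t ` {..<d*(s+t)}"
    then obtain r where "r < d*(s+t)" "y = sg d s t r" by auto
    then obtain i a where r: "r = i*(s+t) + a" "a < s+t" "i < d" "y = sg d s t r" using dm_decomp by metis
    show "y \<in> {..<d*(s+t)}"
    proof (cases "a < s")
      case True
      have "i*s + a < d*s" using dm_bound r True by blast
      then show ?thesis using True r sg_eq1 by (simp add: distrib_left)
    next
      case False
      then obtain a' where a': "a = s + a'" "a' < t" using r
        by (metis add_diff_inverse_nat add_less_cancel_left)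
      have "i*t + a' < d*t" using dm_bound r a' by blast
      then show ?thesis using a' r sg_eq2 by (simp add: distrib_left)
    qed
  qed
  show "tg d s t ` {..<d*(s+t)} \<subseteq> {..<d*(s+t)}"
  proof
    fix y assume "y \<in> tg d s t ` {..<d*(s+t)}"
    then obtain x where x: "x < d*(s+t)" "y = tg d s t x" by auto
    show "y \<in> {..<d*(s+t)}"
    proof (cases "x < d*s")
      case True
      then obtain i a where r: "x = i*s + a" "a < s" "i < d" using dm_decomp by blast
      have "i*(s+t) + a < d*(s+t)" using dm_bound r by simp
      then show ?thesis using True r x dm_eq[of a s i] by (simp add: tg_def)
    next
      case False
      then have "x - d*s < d*t" using x by (simp add: distrib_left)
      then obtain i a where r: "x - d*s = i*t + a" "a < t" "i < d" using dm_decomp by blast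
      have "tg d s t x = i*(s+t) + (s + a)" using False r dm_eq[of a t i] by (simp add: tg_def)
      moreover have "i*(s+t) + (s + a) < d*(s+t)" using dm_bound r by simp
      ultimately show ?thesis using x by simp
    qed
  qed
qed

definition Wm :: "nat \<Rightarrow> nat \<Rightarrow> nat \<Rightarrow> complex mat \<Rightarrow> complex mat \<Rightarrow> complex mat" where
  "Wm d s t U V = mat (d*(s+t)) (d*(s+t)) (\<lambda>(r,c). bdiag (d*s) (d*t) U V $$ (sg d s t r, sg d s t c))"

lemma Wm_unitary:
  assumes "s \<ge> 1" "t \<ge> 1" "U \<in> unitary_group (d*s)" "V \<in> unitary_group (d*t)"
  shows "Wm d s t U V \<in> unitary_group (d*(s+t))"
proof -
  have "bdiag (d*s) (d*t) U V \<in> unitary_group (d*(s+t))"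
    using bdiag_unitary[OF assms(3,4)] by (simp add: distrib_left)
  then show ?thesis unfolding Wm_def by (rule unitary_perm[OF _ sg_bij[OF assms(1,2)]])
qed

lemma phi_entry:
  assumes "i < d" "j < d"
  shows "phi d s U $$ (i,j) = (\<Sum>a<s. \<Sum>b<s. (cmod (U $$ (i*s+a, j*s+b)))\<^sup>2) / real s"
  using assms by (simp add: phi_def frob_norm_sq_def block_mat_def)

lemma wcomb: "(x::real) > 0 \<Longrightarrow> y > 0 \<Longrightarrow> (A+B)/(x+y) = x/(x+y)*(A/x) + y/(x+y)*(B/y)"
  by (simp add: add_divide_distrib)

lemma Wm_phi:
  assumes "s \<ge> 1" "t \<ge> 1" "i < d" "j < d"
  shows "phi d (s+t) (Wm d s t U V) $$ (i,j) =
     (real s / real (s+t)) * phi d s U $$ (i,j) + (real t / real (s+t)) * phi d t V $$ (i,j)"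
proof -
  let ?B = "bdiag (d*s) (d*t) U V"
  let ?W = "Wm d s t U V"
  have Wa: "?W $$ (i*(s+t)+a, j*(s+t)+b) = ?B $$ (sg d s t (i*(s+t)+a), sg d s t (j*(s+t)+b))"
    if "a < s+t" "b < s+t" for a b
    using dm_bound[OF assms(3) that(1)] dm_bound[OF assms(4) that(2)] by (simp add: Wm_def)
  have bi: "i*s+a < d*s" if "a<s" for a using dm_bound[OF assms(3) that] .
  have bj: "j*s+a < d*s" if "a<s" for a using dm_bound[OF assms(4) that] .
  have bi2: "i*t+a < d*t" if "a<t" for a using dm_bound[OF assms(3) that] .
  have bj2: "j*t+a < d*t" if "a<t" for a using dm_bound[OF assms(4) that] .
  have "frob_norm_sq (block_mat (s+t) ?W i j)
      = (\<Sum>a<s+t. \<Sum>b<s+t. (cmod (?W $$ (i*(s+t)+a, j*(s+t)+b)))\<^sup>2)"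
    by (simp add: frob_norm_sq_def block_mat_def)
  also have "\<dots> = (\<Sum>a<s+t. \<Sum>b<s+t. (cmod (?B $$ (sg d s t (i*(s+t)+a), sg d s t (j*(s+t)+b))))\<^sup>2)"
    by (intro sum.cong refl) (simp add: Wa)
  also have "\<dots> = (\<Sum>a<s. \<Sum>b<s. (cmod (U $$ (i*s+a, j*s+b)))\<^sup>2)
                 + (\<Sum>a<t. \<Sum>b<t. (cmod (V $$ (i*t+a, j*t+b)))\<^sup>2)"
  proof -
    have E1: "?B $$ (sg d s t (i*(s+t)+a), sg d s t (j*(s+t)+b)) = U$$(i*s+a, j*s+b)"
      if "a<s" "b<s" for a b
      using that bi[OF that(1)] bj[OF that(2)] by (simp add: sg_eq1 bdiag_def)
    have E2: "?B $$ (sg d s t (i*(s+t)+a), sg d s t (j*(s+t)+(s+b))) = 0"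
      if "a<s" "b<t" for a b
      using that bi[OF that(1)] bj2[OF that(2)] by (simp add: sg_eq1 sg_eq2 bdiag_def)
    have E3: "?B $$ (sg d s t (i*(s+t)+(s+a)), sg d s t (j*(s+t)+b)) = 0"
      if "a<t" "b<s" for a b
      using that bi2[OF that(1)] bj[OF that(2)] by (simp add: sg_eq1 sg_eq2 bdiag_def)
    have E4: "?B $$ (sg d s t (i*(s+t)+(s+a)), sg d s t (j*(s+t)+(s+b))) = V$$(i*t+a, j*t+b)"
      if "a<t" "b<t" for a b
      using that bi2[OF that(1)] bj2[OF that(2)] by (simp add: sg_eq2 bdiag_def)
    have S1: "(\<Sum>b<s. (cmod (?B $$ (sg d s t (i*(s+t)+a), sg d s t (j*(s+t)+b))))\<^sup>2)
       = (\<Sum>b<s. (cmod (U $$ (i*s+a, j*s+b)))\<^sup>2)" if "a<s" for a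
      using that by (intro sum.cong refl) (simp add: E1)
    have S2: "(\<Sum>b<t. (cmod (?B $$ (sg d s t (i*(s+t)+a), sg d s t (j*(s+t)+(s+b)))))\<^sup>2) = 0" if "a<s" for a
      using that by (intro sum.neutral) (simp add: E2)
    have S3: "(\<Sum>b<s. (cmod (?B $$ (sg d s t (i*(s+t)+(s+a)), sg d s t (j*(s+t)+b))))\<^sup>2) = 0" if "a<t" for a
      using that by (intro sum.neutral) (simp add: E3)
    have S4: "(\<Sum>b<t. (cmod (?B $$ (sg d s t (i*(s+t)+(s+a)), sg d s t (j*(s+t)+(s+b)))))\<^sup>2)
       = (\<Sum>b<t. (cmod (V $$ (i*t+a, j*t+b)))\<^sup>2)" if "a<t" for a
      using that by (intro sum.cong refl) (simp add: E4)
    show ?thesis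
      unfolding sum_split_add
      by (intro arg_cong2[where f="(+)"] sum.cong refl) (simp_all add: S1 S2 S3 S4)

  qed
  finally have F: "frob_norm_sq (block_mat (s+t) ?W i j) = (\<Sum>a<s. \<Sum>b<s. (cmod (U $$ (i*s+a, j*s+b)))\<^sup>2)
                 + (\<Sum>a<t. \<Sum>b<t. (cmod (V $$ (i*t+a, j*t+b)))\<^sup>2)" .
  have P: "phi d (s+t) ?W $$ (i,j) = frob_norm_sq (block_mat (s+t) ?W i j) / real (s+t)"
    using assms by (simp add: phi_def)
  have sp: "real s > 0" "real t > 0" using assms by auto
  show ?thesis
    unfolding P F phi_entry[OF assms(3,4), of s U] phi_entry[OF assms(3,4), of t V]
    using wcomb[OF sp] by simp
qed

lemma Uset_carrier: "X \<in> Uset d s \<Longrightarrow> X \<in> carrier_mat d d"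
  by (auto simp: Uset_def phi_def)

lemma binary:
  assumes "s \<ge> 1" "t \<ge> 1" "Y \<in> Uset d s" "Z \<in> Uset d t"
  shows "mat d d (\<lambda>ij. real s / real (s+t) * Y $$ ij + real t / real (s+t) * Z $$ ij) \<in> Uset d (s+t)"
proof -
  obtain U where U: "U \<in> unitary_group (d*s)" "Y = phi d s U" using assms(3) by (auto simp: Uset_def)
  obtain V where V: "V \<in> unitary_group (d*t)" "Z = phi d t V" using assms(4) by (auto simp: Uset_def)
  have "mat d d (\<lambda>ij. real s / real (s+t) * Y $$ ij + real t / real (s+t) * Z $$ ij) = phi d (s+t) (Wm d s t U V)"
  proof (rule eq_matI)
    fix i j assume "i < dim_row (phi d (s+t) (Wm d s t U V))" "j < dim_col (phi d (s+t) (Wm d s t U V))"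
    hence ij: "i<d" "j<d" by (simp_all add: phi_def)
    show "mat d d (\<lambda>ij. real s / real (s+t) * Y $$ ij + real t / real (s+t) * Z $$ ij) $$ (i,j) = phi d (s+t) (Wm d s t U V) $$ (i,j)"
      using ij by (simp add: Wm_phi[OF assms(1,2) ij] U(2) V(2) del: of_nat_add)
  qed (simp_all add: phi_def)
  moreover have "phi d (s+t) (Wm d s t U V) \<in> Uset d (s+t)"
    unfolding Uset_def using Wm_unitary[OF assms(1,2) U(1) V(1)] by blast
  ultimately show ?thesis by simp
qed

lemma comb_same:
  assumes "X \<in> carrier_mat d d" "a + b = (1::real)"
  shows "mat d d (\<lambda>ij. a * X $$ ij + b * X $$ ij) = X"
proof (rule eq_matI)
  fix i j assume "i < dim_row X" "j < dim_col X"
  then show "mat d d (\<lambda>ij. a * X $$ ij + b * X $$ ij) $$ (i,j) = X $$ (i,j)"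
    using assms by (simp add: distrib_right[symmetric])
qed (use assms in auto)

lemma part1:
  "k \<ge> 1 \<Longrightarrow> \<forall>l<k. s l \<ge> 1 \<Longrightarrow> \<forall>l<k. X l \<in> Uset d (s l) \<Longrightarrow>
   mat d d (\<lambda>ij. \<Sum>l<k. real (s l) / real (\<Sum>m<k. s m) * X l $$ ij) \<in> Uset d (\<Sum>m<k. s m)"
  for k :: nat and s :: "nat \<Rightarrow> nat"
proof (induction k)
  case 0 then show ?case by simp
next
  case (Suc k)
  show ?case
  proof (cases "k = 0")
    case True
    have s0: "real (s 0) > 0" using Suc.prems True by auto
    have "mat d d (\<lambda>ij. \<Sum>l<Suc k. real (s l) / real (\<Sum>m<Suc k. s m) * X l $$ ij) = X 0"
      using True s0 Uset_carrier[of "X 0" d "s 0"] Suc.prems by (intro eq_matI) auto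
    then show ?thesis using True Suc.prems by simp
  next
    case False
    let ?S = "\<Sum>m<k. s m"
    have Sge: "?S \<ge> 1"
    proof -
      have "s 0 \<le> ?S" using False by (intro member_le_sum) auto
      then show ?thesis using Suc.prems(2) by force
    qed
    have IH: "mat d d (\<lambda>ij. \<Sum>l<k. real (s l) / real ?S * X l $$ ij) \<in> Uset d ?S"
      using Suc.IH False Suc.prems by auto
    have B: "mat d d (\<lambda>ij. real ?S / real (?S + s k) * mat d d (\<lambda>ij. \<Sum>l<k. real (s l) / real ?S * X l $$ ij) $$ ij
        + real (s k) / real (?S + s k) * X k $$ ij) \<in> Uset d (?S + s k)"
    proof -
      have "s k \<ge> 1" "X k \<in> Uset d (s k)" using Suc.prems by auto
      from binary[OF Sge this(1) IH this(2)] show ?thesis .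
    qed
    have Sp: "real ?S > 0" using Sge by (simp del: of_nat_sum)
    have E: "mat d d (\<lambda>ij. real ?S / real (?S + s k) * mat d d (\<lambda>ij. \<Sum>l<k. real (s l) / real ?S * X l $$ ij) $$ ij
        + real (s k) / real (?S + s k) * X k $$ ij)
       = mat d d (\<lambda>ij. \<Sum>l<Suc k. real (s l) / real (\<Sum>m<Suc k. s m) * X l $$ ij)"
    proof (rule eq_matI)
      fix i j assume ij: "i < dim_row (mat d d (\<lambda>ij. \<Sum>l<Suc k. real (s l) / real (\<Sum>m<Suc k. s m) * X l $$ ij))"
                      "j < dim_col (mat d d (\<lambda>ij. \<Sum>l<Suc k. real (s l) / real (\<Sum>m<Suc k. s m) * X l $$ ij))"
      have t: "real ?S / real (?S + s k) * (real (s l) / real ?S * x) = real (s l) / real (?S + s k) * x" for l x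
        using Sp by (simp add: field_simps)
      show "mat d d (\<lambda>ij. real ?S / real (?S + s k) * mat d d (\<lambda>ij. \<Sum>l<k. real (s l) / real ?S * X l $$ ij) $$ ij
        + real (s k) / real (?S + s k) * X k $$ ij) $$ (i,j)
       = mat d d (\<lambda>ij. \<Sum>l<Suc k. real (s l) / real (\<Sum>m<Suc k. s m) * X l $$ ij) $$ (i,j)"
      proof -
        have ij': "i < d" "j < d" using ij by auto
        have "mat d d (\<lambda>ij. real ?S / real (?S + s k) * mat d d (\<lambda>ij. \<Sum>l<k. real (s l) / real ?S * X l $$ ij) $$ ij
          + real (s k) / real (?S + s k) * X k $$ ij) $$ (i,j)
          = real ?S / real (?S + s k) * (\<Sum>l<k. real (s l) / real ?S * X l $$ (i,j))
            + real (s k) / real (?S + s k) * X k $$ (i,j)"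
          using ij' by (simp del: of_nat_add of_nat_sum)
        also have "\<dots> = (\<Sum>l<k. real (s l) / real (?S + s k) * X l $$ (i,j))
            + real (s k) / real (?S + s k) * X k $$ (i,j)"
          by (simp only: sum_distrib_left t)
        also have "\<dots> = (\<Sum>l<Suc k. real (s l) / real (?S + s k) * X l $$ (i,j))"
          by (simp only: sum.lessThan_Suc)
        also have "\<dots> = mat d d (\<lambda>ij. \<Sum>l<Suc k. real (s l) / real (\<Sum>m<Suc k. s m) * X l $$ ij) $$ (i,j)"
          using ij' by (simp del: of_nat_add of_nat_sum)
        finally show ?thesis .
      qed
    qed auto
    show ?thesis using B E by simp
  qed
qed

lemma wsum1: "s \<ge> 1 \<Longrightarrow> t \<ge> 1 \<Longrightarrow> real s / real (s+t) + real t / real (s+t) = 1"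
  by (simp add: add_divide_distrib[symmetric] del: of_nat_add)

lemma part3: "s \<ge> 1 \<Longrightarrow> t \<ge> 1 \<Longrightarrow> X \<in> Uset d s \<Longrightarrow> X \<in> Uset d t \<Longrightarrow> X \<in> Uset d (s+t)"
  using binary[of s t X d X] comb_same[OF Uset_carrier wsum1] by metis

lemma part2: "s \<ge> 1 \<Longrightarrow> n \<ge> 1 \<Longrightarrow> X \<in> Uset d s \<Longrightarrow> X \<in> Uset d (n*s)"
proof (induction n)
  case 0 then show ?case by simp
next
  case (Suc n)
  show ?case
  proof (cases "n = 0")
    case True then show ?thesis using Suc by simp
  next
    case False
    then have "X \<in> Uset d (n*s)" "n*s \<ge> 1" using Suc by auto
    then have "X \<in> Uset d (n*s + s)" using part3 Suc.prems by blast
    then show ?thesis by (simp add: add.commute)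
  qed
qed

theorem corollary2p7:
  fixes d :: nat
  assumes "d \<ge> 2"
  shows "(\<forall>k (s :: nat \<Rightarrow> nat). k \<ge> 1 \<longrightarrow> (\<forall>l<k. s l \<ge> 1) \<longrightarrow>
            wsum_sets d k (\<lambda>l. real (s l) / real (\<Sum>m<k. s m)) (\<lambda>l. Uset d (s l))
              \<subseteq> Uset d (\<Sum>m<k. s m))
       \<and> (\<forall>s n :: nat. s \<ge> 1 \<longrightarrow> n \<ge> 1 \<longrightarrow> Uset d s \<subseteq> Uset d (n * s))
       \<and> (\<forall>s t :: nat. s \<ge> 1 \<longrightarrow> t \<ge> 1 \<longrightarrow> Uset d s \<inter> Uset d t \<subseteq> Uset d (s + t))"
  using part1 part2 part3 unfolding wsum_sets_def by blast

end
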